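(* Let $\epsilon=(\epsilon_n)\in(0,1]^{\mathbb{N}}$ and $\omega\in\beta\mathbb{N}$. The complete residue field $\mathscr{H}(\omega)$ is algebraically closed and spherically complete, and $|\mathscr{H}(\omega)|=\mathbb{R}_+$. Moreover: (1) if $e=\lim_\omega\epsilon_n>0$, then $\mathscr{H}(\omega)$ is isometric to $(\mathbb{C},|\cdot|^e)$, hence is an Archimedean metrized field; (2) if $\lim_\omega\epsilon_n=0$, then $\mathscr{H}(\omega)$ is a non-Archimedean metrized field.
   Context: $A^\epsilon=\{(x_n)\in\mathbb{C}^{\mathbb{N}}:\sup_n|x_n|^{\epsilon_n}<\infty\}$ with norm $\|x\|=\sup_n|x_n|^{\epsilon_n}$ ($|\cdot|$ the Euclidean norm). $\beta\mathbb{N}$ is the set of ultrafilters on $\mathbb{N}$; for $\omega\in\beta\mathbb{N}$, $\lim_\omega$ denotes the limit along $\omega$. Each $\omega$ defines the bounded multiplicative seminorm $|x|_\omega=\lim_\omega|x_n|^{\epsilon_n}$ on $A^\epsilon$, with kernel $\ker(\omega)=\{x:\lim_\omega|x_n|^{\epsilon_n}=0\}$; $\mathscr{H}(\omega)$ is the completion of the fraction field of $A^\epsilon/\ker(\omega)$ for the induced norm. A metrized field is spherically complete if every decreasing sequence of closed balls has nonempty intersection. *)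

theory Defs
  imports "HOL-Analysis.Analysis" "HOL-Algebra.Algebraic_Closure"
begin

type_synonym cseq = "nat \<Rightarrow> complex"
type_synonym frac = "cseq \<times> cseq"   \<comment> \<open>a pair (a,b) stands for the fraction a/b\<close>

definition Aeps :: "(nat \<Rightarrow> real) \<Rightarrow> cseq set" where
  "Aeps eps = {x. bdd_above (range (\<lambda>n. cmod (x n) powr eps n))}"

text \<open>Ultrafilters on nat (the points of beta N), as filters.\<close>

definition is_ultrafilter :: "nat filter \<Rightarrow> bool" where
  "is_ultrafilter F \<longleftrightarrow> F \<noteq> bot \<and> (\<forall>P. eventually P F \<or> eventually (\<lambda>n. \<not> P n) F)"

definition omega_sn :: "(nat \<Rightarrow> real) \<Rightarrow> nat filter \<Rightarrow> cseq \<Rightarrow> real" where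
  "omega_sn eps w x = Lim w (\<lambda>n. cmod (x n) powr eps n)"

definition omega_ker :: "(nat \<Rightarrow> real) \<Rightarrow> nat filter \<Rightarrow> cseq set" where
  "omega_ker eps w = {x \<in> Aeps eps. omega_sn eps w x = 0}"

text \<open>Fractions a/b with a, b in A^eps and b not in ker(omega), with the induced norm.
  (Fractions are identified later, inside the completion, via distance zero.)\<close>

definition fracs :: "(nat \<Rightarrow> real) \<Rightarrow> nat filter \<Rightarrow> frac set" where
  "fracs eps w = {(a, b). a \<in> Aeps eps \<and> b \<in> Aeps eps \<and> b \<notin> omega_ker eps w}"

definition fadd :: "frac \<Rightarrow> frac \<Rightarrow> frac" where
  "fadd p q = (\<lambda>n. fst p n * snd q n + fst q n * snd p n, \<lambda>n. snd p n * snd q n)"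

definition fmul :: "frac \<Rightarrow> frac \<Rightarrow> frac" where
  "fmul p q = (\<lambda>n. fst p n * fst q n, \<lambda>n. snd p n * snd q n)"

definition fneg :: "frac \<Rightarrow> frac" where
  "fneg p = (\<lambda>n. - fst p n, snd p)"

definition fnorm :: "(nat \<Rightarrow> real) \<Rightarrow> nat filter \<Rightarrow> frac \<Rightarrow> real" where
  "fnorm eps w p = omega_sn eps w (fst p) / omega_sn eps w (snd p)"

definition fdist :: "(nat \<Rightarrow> real) \<Rightarrow> nat filter \<Rightarrow> frac \<Rightarrow> frac \<Rightarrow> real" where
  "fdist eps w p q = fnorm eps w (fadd p (fneg q))"

definition hcauchy :: "(nat \<Rightarrow> real) \<Rightarrow> nat filter \<Rightarrow> (nat \<Rightarrow> frac) \<Rightarrow> bool" where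
  "hcauchy eps w s \<longleftrightarrow> (\<forall>k. s k \<in> fracs eps w) \<and>
     (\<forall>d>0. \<exists>N. \<forall>m\<ge>N. \<forall>n\<ge>N. fdist eps w (s m) (s n) < d)"

definition hclass :: "(nat \<Rightarrow> real) \<Rightarrow> nat filter \<Rightarrow> (nat \<Rightarrow> frac) \<Rightarrow> (nat \<Rightarrow> frac) set" where
  "hclass eps w s = {t. hcauchy eps w t \<and> (\<lambda>k. fdist eps w (s k) (t k)) \<longlonglongrightarrow> 0}"

definition hrep :: "(nat \<Rightarrow> frac) set \<Rightarrow> nat \<Rightarrow> frac" where
  "hrep U = (SOME s. s \<in> U)"

definition Hcarrier :: "(nat \<Rightarrow> real) \<Rightarrow> nat filter \<Rightarrow> (nat \<Rightarrow> frac) set set" where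
  "Hcarrier eps w = {hclass eps w s | s. hcauchy eps w s}"

definition H :: "(nat \<Rightarrow> real) \<Rightarrow> nat filter \<Rightarrow> (nat \<Rightarrow> frac) set ring" where
  "H eps w = \<lparr>carrier = Hcarrier eps w,
      mult = (\<lambda>U V. hclass eps w (\<lambda>k. fmul (hrep U k) (hrep V k))),
      one = hclass eps w (\<lambda>k. (\<lambda>n. 1, \<lambda>n. 1)),
      zero = hclass eps w (\<lambda>k. (\<lambda>n. 0, \<lambda>n. 1)),
      add = (\<lambda>U V. hclass eps w (\<lambda>k. fadd (hrep U k) (hrep V k)))\<rparr>"

definition Hnorm :: "(nat \<Rightarrow> real) \<Rightarrow> nat filter \<Rightarrow> (nat \<Rightarrow> frac) set \<Rightarrow> real" where
  "Hnorm eps w U = lim (\<lambda>k. fnorm eps w (hrep U k))"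

definition metrized_field :: "('a, 'b) ring_scheme \<Rightarrow> ('a \<Rightarrow> real) \<Rightarrow> bool" where
  "metrized_field R N \<longleftrightarrow> field R \<and>
     (\<forall>x\<in>carrier R. 0 \<le> N x \<and> (N x = 0 \<longleftrightarrow> x = \<zero>\<^bsub>R\<^esub>)) \<and>
     (\<forall>x\<in>carrier R. \<forall>y\<in>carrier R. N (x \<otimes>\<^bsub>R\<^esub> y) = N x * N y) \<and>
     (\<forall>x\<in>carrier R. \<forall>y\<in>carrier R. N (x \<oplus>\<^bsub>R\<^esub> y) \<le> N x + N y)"

definition non_archimedean :: "('a, 'b) ring_scheme \<Rightarrow> ('a \<Rightarrow> real) \<Rightarrow> bool" where
  "non_archimedean R N \<longleftrightarrow>
     (\<forall>x\<in>carrier R. \<forall>y\<in>carrier R. N (x \<oplus>\<^bsub>R\<^esub> y) \<le> max (N x) (N y))"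

definition closed_ball_in :: "('a, 'b) ring_scheme \<Rightarrow> ('a \<Rightarrow> real) \<Rightarrow> 'a \<Rightarrow> real \<Rightarrow> 'a set" where
  "closed_ball_in R N c r = {y \<in> carrier R. N (y \<ominus>\<^bsub>R\<^esub> c) \<le> r}"

definition spherically_complete :: "('a, 'b) ring_scheme \<Rightarrow> ('a \<Rightarrow> real) \<Rightarrow> bool" where
  "spherically_complete R N \<longleftrightarrow>
     (\<forall>c r. (\<forall>n. c n \<in> carrier R \<and> 0 \<le> r n) \<and>
        (\<forall>n. closed_ball_in R N (c (Suc n)) (r (Suc n)) \<subseteq> closed_ball_in R N (c n) (r n))
        \<longrightarrow> (\<Inter>n. closed_ball_in R N (c n) (r n)) \<noteq> {})"

definition C_ring :: "complex ring" where
  "C_ring = \<lparr>carrier = UNIV, mult = (*), one = 1, zero = 0, add = (+)\<rparr>"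

end

theory Submission
  imports Defs "HOL-Computational_Algebra.Fundamental_Theorem_Algebra"
begin

lemma ultra_tendsto_exists:
  fixes f :: "nat \<Rightarrow> 'a::topological_space"
  assumes u: "is_ultrafilter w" and K: "compact K" and ev: "eventually (\<lambda>n. f n \<in> K) w"
  shows "\<exists>l\<in>K. (f \<longlongrightarrow> l) w"
proof (rule ccontr)
  assume nc: "\<not> (\<exists>l\<in>K. (f \<longlongrightarrow> l) w)"
  have "\<forall>l\<in>K. \<exists>S. open S \<and> l \<in> S \<and> eventually (\<lambda>n. f n \<notin> S) w"
  proof
    fix l assume "l \<in> K"
    with nc have "\<not> (f \<longlongrightarrow> l) w" by blast
    then obtain S where "open S" "l \<in> S" "\<not> eventually (\<lambda>n. f n \<in> S) w"
      unfolding tendsto_def by blast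
    with u show "\<exists>S. open S \<and> l \<in> S \<and> eventually (\<lambda>n. f n \<notin> S) w"
      unfolding is_ultrafilter_def by blast
  qed
  then obtain S where S: "\<And>l. l \<in> K \<Longrightarrow> open (S l) \<and> l \<in> S l \<and> eventually (\<lambda>n. f n \<notin> S l) w"
    by metis
  have "K \<subseteq> (\<Union>l\<in>K. S l)" using S by blast
  then obtain C where C: "C \<subseteq> K" "finite C" "K \<subseteq> (\<Union>l\<in>C. S l)"
    using compactE_image[OF K, of K S] S by blast
  have "eventually (\<lambda>n. \<forall>l\<in>C. f n \<notin> S l) w"
    using C S by (intro eventually_ball_finite) auto
  with ev have "eventually (\<lambda>n. False) w"
    by eventually_elim (use C in blast)
  with u show False unfolding is_ultrafilter_def by (simp add: eventually_False)
qed

lemma powr_subadd: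
  fixes a b e :: real
  assumes "0 \<le> a" "0 \<le> b" "0 < e" "e \<le> 1"
  shows "(a + b) powr e \<le> a powr e + b powr e"
proof (cases "a + b = 0")
  case True then have "a = 0" "b = 0" using assms by auto
  then show ?thesis by simp
next
  case False
  then have s: "0 < a + b" using assms by auto
  have t: "t \<le> t powr e" if "0 \<le> t" "t \<le> 1" for t :: real
  proof -
    have "t powr 1 \<le> t powr e" using that assms by (intro powr_mono') auto
    then show ?thesis using that by simp
  qed
  have "a / (a+b) \<le> (a/(a+b)) powr e" using assms s by (intro t) auto
  moreover have "b / (a+b) \<le> (b/(a+b)) powr e" using assms s by (intro t) auto
  moreover have "a / (a+b) + b / (a+b) = 1" using s by (simp add: add_divide_distrib[symmetric])
  ultimately have "1 \<le> (a/(a+b)) powr e + (b/(a+b)) powr e" by linarith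
  then have "1 \<le> (a powr e + b powr e) / (a+b) powr e"
    using assms s by (simp add: powr_divide add_divide_distrib)
  moreover have "0 < (a+b) powr e" using s by simp
  ultimately show ?thesis by (simp add: divide_simps)
qed

lemma powr_sum_list_subadd:
  fixes e :: real
  assumes "\<forall>x\<in>set xs. 0 \<le> x" "0 < e" "e \<le> 1"
  shows "(sum_list xs) powr e \<le> sum_list (map (\<lambda>x. x powr e) xs)"
  using assms(1)
proof (induction xs)
  case Nil then show ?case by simp
next
  case (Cons x xs)
  have "0 \<le> sum_list xs" using Cons.prems by (intro sum_list_nonneg) auto
  then have "(x + sum_list xs) powr e \<le> x powr e + (sum_list xs) powr e"
    using Cons.prems assms by (intro powr_subadd) auto
  also have "\<dots> \<le> x powr e + sum_list (map (\<lambda>x. x powr e) xs)"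
    using Cons by auto
  finally show ?case by simp
qed


fun heval :: "complex list \<Rightarrow> complex \<Rightarrow> complex" where
  "heval [] z = 0"
| "heval (c # cs) z = c * z ^ length cs + heval cs z"

fun hor :: "complex list \<Rightarrow> complex \<Rightarrow> complex" where
  "hor [] z = 0"
| "hor (a # xs) z = a + z * hor xs z"

lemma poly_Poly_hor: "poly (Poly xs) z = hor xs z"
  by (induction xs) auto

lemma hor_snoc: "hor (xs @ [c]) z = hor xs z + c * z ^ length xs"
  by (induction xs) (auto simp: algebra_simps)

lemma heval_hor: "heval cs z = hor (rev cs) z"
  by (induction cs) (auto simp: hor_snoc)

lemma heval_root:
  assumes ne: "cs \<noteq> []" and h: "hd cs \<noteq> 0" and l: "2 \<le> length cs"
  shows "\<exists>z. heval cs z = 0"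
proof -
  define p where "p = Poly (rev cs)"
  have "rev cs ! (length cs - 1) = hd cs"
    using ne by (simp add: rev_nth hd_conv_nth)
  then have "Polynomial.coeff p (length cs - 1) = hd cs"
    using ne by (simp add: p_def nth_default_def)
  then have "length cs - 1 \<le> Polynomial.degree p" using h by (intro le_degree) simp
  then have "Polynomial.degree p \<noteq> 0" using l by simp
  then have "\<not> constant (poly p)" using constant_degree[of p] by simp
  then obtain z where "poly p z = 0" using fundamental_theorem_of_algebra by blast
  then show ?thesis by (auto simp: p_def poly_Poly_hor heval_hor)
qed

lemma heval_bound_le:
  assumes z: "1 \<le> cmod z"
  shows "cmod (heval cs z) \<le> sum_list (map cmod cs) * cmod z ^ (length cs - 1)"
proof (induction cs)
  case Nil then show ?case by simp
next
  case (Cons c cs)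
  have S: "0 \<le> sum_list (map cmod cs)" by (induction cs) auto
  have p: "cmod z ^ (length cs - 1) \<le> cmod z ^ length cs"
    using z by (intro power_increasing) auto
  have "cmod (heval (c # cs) z) \<le> cmod c * cmod z ^ length cs + cmod (heval cs z)"
    using norm_triangle_ineq[of "c * z ^ length cs" "heval cs z"] by (simp add: norm_mult norm_power)
  also have "\<dots> \<le> cmod c * cmod z ^ length cs + sum_list (map cmod cs) * cmod z ^ (length cs - 1)"
    using Cons.IH by simp
  also have "\<dots> \<le> cmod c * cmod z ^ length cs + sum_list (map cmod cs) * cmod z ^ length cs"
    using S p by (intro add_left_mono mult_left_mono) auto
  finally show ?case by (simp add: algebra_simps)
qed

lemma root_bound:
  assumes r: "heval (c # cs) z = 0" and c: "c \<noteq> 0" and ne: "cs \<noteq> []"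
  shows "cmod z \<le> max 1 (sum_list (map cmod cs) / cmod c)"
proof (cases "cmod z \<le> 1")
  case True then show ?thesis by simp
next
  case False
  define d where "d = length cs - 1"
  have ld: "length cs = Suc d" using ne by (simp add: d_def)
  have "c * z ^ length cs = - heval cs z" using r by (simp add: eq_neg_iff_add_eq_0)
  then have "cmod c * cmod z ^ length cs = cmod (heval cs z)" by (metis norm_minus_cancel norm_mult norm_power)
  also have "\<dots> \<le> sum_list (map cmod cs) * cmod z ^ d"
    using heval_bound_le[of z cs] False by (simp add: d_def)
  finally have "(cmod c * cmod z) * cmod z ^ d \<le> sum_list (map cmod cs) * cmod z ^ d"
    by (simp add: ld algebra_simps)
  moreover have "0 < cmod z ^ d" using False by (intro zero_less_power) linarith
  ultimately have "cmod c * cmod z \<le> sum_list (map cmod cs)" by simp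
  then have "cmod z \<le> sum_list (map cmod cs) / cmod c" using c by (simp add: field_simps)
  then show ?thesis by simp
qed

lemma sum_list_bound:
  fixes f :: "'a \<Rightarrow> real"
  assumes "\<forall>x\<in>set xs. f x \<le> M"
  shows "sum_list (map f xs) \<le> real (length xs) * M"
  using assms by (induction xs) (auto simp: algebra_simps)

locale S6 =
  fixes eps :: "nat \<Rightarrow> real" and w :: "nat filter"
  assumes eps_pos: "\<And>n. 0 < eps n" and eps_le1: "\<And>n. eps n \<le> 1"
    and ultra: "is_ultrafilter w"
begin

abbreviation A where "A \<equiv> Aeps eps"
abbreviation nrm where "nrm \<equiv> omega_sn eps w"

definition pw :: "cseq \<Rightarrow> nat \<Rightarrow> real" where "pw x n = cmod (x n) powr eps n"

lemma pw_fun: "(\<lambda>n. cmod (x n) powr eps n) = pw x"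
  by (simp add: pw_def[abs_def])

lemma nrm_def': "nrm x = Lim w (pw x)"
  by (simp add: omega_sn_def pw_fun)

lemma pw_nonneg[simp]: "0 \<le> pw x n" by (simp add: pw_def)

lemma w_nontriv: "w \<noteq> bot" using ultra by (simp add: is_ultrafilter_def)

lemma ultraE: "\<not> eventually P w \<Longrightarrow> eventually (\<lambda>n. \<not> P n) w"
  using ultra unfolding is_ultrafilter_def by blast

lemma A_iff: "x \<in> A \<longleftrightarrow> (\<exists>M. \<forall>n. pw x n \<le> M)"
  by (auto simp add: Aeps_def bdd_above_def pw_def)

lemma A_bound:
  assumes "x \<in> A" obtains M where "0 \<le> M" "\<And>n. pw x n \<le> M"
proof -
  obtain M where M: "\<And>n. pw x n \<le> M" using assms A_iff by blast
  have "0 \<le> M" using M[of 0] pw_nonneg[of x 0] by linarith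
  then show ?thesis using M that by blast
qed

lemma AI: "(\<And>n. pw x n \<le> M) \<Longrightarrow> x \<in> A"
  using A_iff by blast

lemma nrm_tendsto:
  assumes "x \<in> A" shows "(pw x \<longlongrightarrow> nrm x) w"
proof -
  obtain M where M: "0 \<le> M" "\<And>n. pw x n \<le> M" using A_bound assms by blast
  have "\<exists>l\<in>{0..M}. (pw x \<longlongrightarrow> l) w"
    by (rule ultra_tendsto_exists[OF ultra compact_Icc]) (use M in auto)
  then obtain l where l: "(pw x \<longlongrightarrow> l) w" by blast
  then have "Lim w (pw x) = l" using tendsto_Lim w_nontriv by blast
  then show ?thesis using l by (simp add: nrm_def')
qed

lemma nrm_unique:
  assumes "(pw x \<longlongrightarrow> l) w" shows "nrm x = l"
  using assms tendsto_Lim w_nontriv by (simp add: nrm_def')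

lemma nrm_cong:
  assumes "x \<in> A" "eventually (\<lambda>n. y n = x n) w"
  shows "nrm y = nrm x"
proof -
  have "eventually (\<lambda>n. pw y n = pw x n) w"
    using assms(2) by eventually_elim (simp add: pw_def)
  then have "(pw y \<longlongrightarrow> nrm x) w"
    using nrm_tendsto[OF assms(1)] tendsto_cong by blast
  then show ?thesis by (rule nrm_unique)
qed

lemma nrm_nonneg: "x \<in> A \<Longrightarrow> 0 \<le> nrm x"
  by (rule tendsto_lowerbound[OF nrm_tendsto _ w_nontriv]) (auto intro: always_eventually)

lemma nrm_le_ev: "x \<in> A \<Longrightarrow> eventually (\<lambda>n. pw x n \<le> c) w \<Longrightarrow> nrm x \<le> c"
  using nrm_tendsto tendsto_upperbound w_nontriv by blast

lemma nrm_ge_ev: "x \<in> A \<Longrightarrow> eventually (\<lambda>n. c \<le> pw x n) w \<Longrightarrow> c \<le> nrm x"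
  using nrm_tendsto tendsto_lowerbound w_nontriv by blast

lemma nrm_less_ev: "x \<in> A \<Longrightarrow> nrm x < c \<Longrightarrow> eventually (\<lambda>n. pw x n < c) w"
  using nrm_tendsto order_tendstoD(2) by blast

lemma nrm_gt_ev: "x \<in> A \<Longrightarrow> c < nrm x \<Longrightarrow> eventually (\<lambda>n. c < pw x n) w"
  using nrm_tendsto order_tendstoD(1) by blast

lemma pw_add: "pw (\<lambda>n. x n + y n) n \<le> pw x n + pw y n"
proof -
  have "cmod (x n + y n) powr eps n \<le> (cmod (x n) + cmod (y n)) powr eps n"
    using eps_pos[of n] by (intro powr_mono2) (auto intro: norm_triangle_ineq)
  also have "\<dots> \<le> cmod (x n) powr eps n + cmod (y n) powr eps n"
    using eps_pos[of n] eps_le1[of n] by (intro powr_subadd) auto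
  finally show ?thesis by (simp add: pw_def)
qed

lemma pw_mult: "pw (\<lambda>n. x n * y n) n = pw x n * pw y n"
  by (simp add: pw_def norm_mult powr_mult)

lemma pw_minus: "pw (\<lambda>n. - x n) = pw x"
  by (simp add: pw_def[abs_def])

lemma pw_const: "pw (\<lambda>n. c) n \<le> max 1 (cmod c)"
proof (cases "cmod c \<le> 1")
  case True then show ?thesis using eps_pos[of n] by (simp add: pw_def powr_le1)
next
  case False
  then have "cmod c powr eps n \<le> cmod c powr 1"
    using eps_le1[of n] by (intro powr_mono) auto
  then show ?thesis using False by (simp add: pw_def)
qed

lemma A_add: "x \<in> A \<Longrightarrow> y \<in> A \<Longrightarrow> (\<lambda>n. x n + y n) \<in> A"
proof -
  assume "x \<in> A" "y \<in> A"
  then obtain M N where M: "\<And>n. pw x n \<le> M" and N: "\<And>n. pw y n \<le> N" using A_bound by metis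
  have "pw (\<lambda>n. x n + y n) n \<le> M + N" for n using pw_add[of x y n] M[of n] N[of n] by linarith
  then show ?thesis by (rule AI)
qed

lemma A_mult: "x \<in> A \<Longrightarrow> y \<in> A \<Longrightarrow> (\<lambda>n. x n * y n) \<in> A"
proof -
  assume "x \<in> A" "y \<in> A"
  then obtain M N where MN: "0 \<le> M" "\<And>n. pw x n \<le> M" "0 \<le> N" "\<And>n. pw y n \<le> N" using A_bound by metis
  then have "pw (\<lambda>n. x n * y n) n \<le> M * N" for n
    unfolding pw_mult by (intro mult_mono) auto
  then show ?thesis by (rule AI)
qed

lemma A_minus: "x \<in> A \<Longrightarrow> (\<lambda>n. - x n) \<in> A"
  using A_iff pw_minus by metis

lemma A_diff: "x \<in> A \<Longrightarrow> y \<in> A \<Longrightarrow> (\<lambda>n. x n - y n) \<in> A"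
  using A_add[of x "\<lambda>n. - y n"] A_minus by simp

lemma A_const: "(\<lambda>n. c) \<in> A"
  using pw_const by (intro AI) 

lemma nrm_mult: "x \<in> A \<Longrightarrow> y \<in> A \<Longrightarrow> nrm (\<lambda>n. x n * y n) = nrm x * nrm y"
  by (rule nrm_unique) (simp add: pw_mult[abs_def] tendsto_mult nrm_tendsto)

lemma nrm_add: "x \<in> A \<Longrightarrow> y \<in> A \<Longrightarrow> nrm (\<lambda>n. x n + y n) \<le> nrm x + nrm y"
  by (rule tendsto_le[OF w_nontriv _ nrm_tendsto[OF A_add]])
     (auto intro!: tendsto_add nrm_tendsto always_eventually simp: pw_add)

lemma nrm_minus: "nrm (\<lambda>n. - x n) = nrm x"
  by (simp add: nrm_def' pw_minus)

lemma nrm_diff_comm: "nrm (\<lambda>n. x n - y n) = nrm (\<lambda>n. y n - x n)"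
  using nrm_minus[of "\<lambda>n. x n - y n"] by simp

lemma nrm_tri:
  assumes "x \<in> A" "y \<in> A" "z \<in> A"
  shows "nrm (\<lambda>n. x n - z n) \<le> nrm (\<lambda>n. x n - y n) + nrm (\<lambda>n. y n - z n)"
proof -
  have "nrm (\<lambda>n. x n - z n) = nrm (\<lambda>n. (x n - y n) + (y n - z n))" by simp
  also have "\<dots> \<le> nrm (\<lambda>n. x n - y n) + nrm (\<lambda>n. y n - z n)"
    by (rule nrm_add) (use assms A_diff in auto)
  finally show ?thesis .
qed

lemma nrm_le_diff:
  assumes "x \<in> A" "y \<in> A"
  shows "nrm x \<le> nrm y + nrm (\<lambda>n. x n - y n)"
proof -
  have "nrm x = nrm (\<lambda>n. y n + (x n - y n))" by simp
  also have "\<dots> \<le> nrm y + nrm (\<lambda>n. x n - y n)"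
    by (rule nrm_add) (use assms A_diff in auto)
  finally show ?thesis .
qed

lemma nrm_abs_diff:
  assumes "x \<in> A" "y \<in> A"
  shows "\<bar>nrm x - nrm y\<bar> \<le> nrm (\<lambda>n. x n - y n)"
  using nrm_le_diff[OF assms] nrm_le_diff[OF assms(2,1)] nrm_diff_comm[of x y] by linarith

lemma nrm_const_tendsto: "((\<lambda>n. cmod c powr eps n) \<longlongrightarrow> nrm (\<lambda>n. c)) w"
  using nrm_tendsto[OF A_const] by (simp add: pw_def[abs_def])

lemma nrm_one: "nrm (\<lambda>n. 1) = 1"
  by (rule nrm_unique) (simp add: pw_def[abs_def])

lemma nrm_zero: "nrm (\<lambda>n. 0) = 0"
  by (rule nrm_unique) (simp add: pw_def[abs_def])

lemma nrm_ev0: "eventually (\<lambda>n. y n = 0) w \<Longrightarrow> nrm y = 0"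
  using nrm_cong[OF A_const, of y 0] nrm_zero by simp


lemma nrm_pos: "b \<in> A \<Longrightarrow> nrm b \<noteq> 0 \<Longrightarrow> 0 < nrm b"
  using nrm_nonneg[of b] by linarith

definition inv_s :: "cseq \<Rightarrow> cseq" where
  "inv_s b n = (if nrm b / 2 \<le> pw b n then 1 / b n else 0)"

lemma inv_s_ev:
  assumes "b \<in> A" "nrm b \<noteq> 0"
  shows "eventually (\<lambda>n. inv_s b n * b n = 1) w"
proof -
  have pos: "0 < nrm b" using nrm_pos assms by blast
  have "eventually (\<lambda>n. nrm b / 2 < pw b n) w" using nrm_gt_ev[of b "nrm b / 2"] assms pos by linarith
  then show ?thesis
  proof eventually_elim
    case (elim n)
    have "b n \<noteq> 0"
    proof
      assume "b n = 0" then have "pw b n = 0" by (simp add: pw_def)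
      with elim pos show False by simp
    qed
    then show ?case using elim by (simp add: inv_s_def)
  qed
qed

lemma inv_s_A:
  assumes "b \<in> A" "nrm b \<noteq> 0"
  shows "inv_s b \<in> A"
proof (rule AI)
  fix n
  have pos: "0 < nrm b" using nrm_pos assms by blast
  show "pw (inv_s b) n \<le> 2 / nrm b"
  proof (cases "nrm b / 2 \<le> pw b n")
    case True
    then have pb: "0 < pw b n" using pos by linarith
    have "pw (inv_s b) n = 1 / pw b n"
      using True by (simp add: inv_s_def pw_def norm_divide powr_divide)
    also have "\<dots> \<le> 1 / (nrm b / 2)"
      using True pos by (intro divide_left_mono) auto
    finally show ?thesis by simp
  next
    case False
    then show ?thesis using pos by (simp add: inv_s_def pw_def)
  qed
qed

definition V :: "frac \<Rightarrow> cseq" where "V p n = fst p n * inv_s (snd p) n"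

lemma fracsD:
  assumes "p \<in> fracs eps w"
  shows "fst p \<in> A" "snd p \<in> A" "nrm (snd p) \<noteq> 0"
  using assms by (auto simp: fracs_def omega_ker_def)

lemma fracsI:
  "fst p \<in> A \<Longrightarrow> snd p \<in> A \<Longrightarrow> nrm (snd p) \<noteq> 0 \<Longrightarrow> p \<in> fracs eps w"
  by (cases p) (auto simp: fracs_def omega_ker_def)

lemma V_A: "p \<in> fracs eps w \<Longrightarrow> V p \<in> A"
  using A_mult[of "fst p" "inv_s (snd p)"] inv_s_A fracsD by (simp add: V_def[abs_def])

lemma V_ev: "p \<in> fracs eps w \<Longrightarrow> eventually (\<lambda>n. fst p n = V p n * snd p n) w"
  using inv_s_ev[of "snd p"] fracsD[of p]
  by (auto elim!: eventually_mono simp: V_def mult.assoc)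

lemma V_ev_eq:
  assumes "p \<in> fracs eps w" "eventually (\<lambda>n. fst p n = x n * snd p n) w"
  shows "eventually (\<lambda>n. V p n = x n) w"
  using inv_s_ev[of "snd p"] fracsD[OF assms(1)] assms(2)
proof -
  have "eventually (\<lambda>n. inv_s (snd p) n * snd p n = 1) w"
    using inv_s_ev fracsD[OF assms(1)] by blast
  with assms(2) show ?thesis
  proof eventually_elim
    case (elim n)
    then have "V p n = x n * (inv_s (snd p) n * snd p n)" by (simp add: V_def algebra_simps)
    then show ?case using elim by simp
  qed
qed

lemma fnorm_V:
  assumes "p \<in> fracs eps w"
  shows "fnorm eps w p = nrm (V p)"
proof -
  note fp = fracsD[OF assms]
  have "nrm (fst p) = nrm (\<lambda>n. V p n * snd p n)"
    by (rule nrm_cong) (use A_mult V_A fp assms V_ev in auto)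
  also have "\<dots> = nrm (V p) * nrm (snd p)"
    using nrm_mult V_A fp assms by blast
  finally show ?thesis using fp by (simp add: fnorm_def)
qed

lemma fdist_V:
  assumes p: "p \<in> fracs eps w" and q: "q \<in> fracs eps w"
  shows "fdist eps w p q = nrm (\<lambda>n. V p n - V q n)"
proof -
  note fp = fracsD[OF p] and fq = fracsD[OF q]
  have VA: "(\<lambda>n. V p n - V q n) \<in> A" using A_diff V_A p q by blast
  have BA: "(\<lambda>n. snd p n * snd q n) \<in> A" using A_mult fp fq by blast
  have "nrm (\<lambda>n. fst p n * snd q n + - fst q n * snd p n)
      = nrm (\<lambda>n. (V p n - V q n) * (snd p n * snd q n))"
  proof (rule nrm_cong)
    show "(\<lambda>n. (V p n - V q n) * (snd p n * snd q n)) \<in> A" using A_mult VA BA by blast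
    show "eventually (\<lambda>n. fst p n * snd q n + - fst q n * snd p n
        = (V p n - V q n) * (snd p n * snd q n)) w"
      using V_ev[OF p] V_ev[OF q] by eventually_elim (simp add: algebra_simps)
  qed
  also have "\<dots> = nrm (\<lambda>n. V p n - V q n) * (nrm (snd p) * nrm (snd q))"
    using nrm_mult[OF VA BA] nrm_mult fp fq by simp
  finally show ?thesis using fp fq
    by (simp add: fdist_def fnorm_def fadd_def fneg_def nrm_mult)
qed

lemma fadd_fracs:
  assumes p: "p \<in> fracs eps w" and q: "q \<in> fracs eps w"
  shows "fadd p q \<in> fracs eps w"
  using fracsD[OF p] fracsD[OF q]
  by (intro fracsI) (auto simp: fadd_def intro!: A_add A_mult simp: nrm_mult)

lemma fmul_fracs:
  assumes p: "p \<in> fracs eps w" and q: "q \<in> fracs eps w"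
  shows "fmul p q \<in> fracs eps w"
  using fracsD[OF p] fracsD[OF q]
  by (intro fracsI) (auto simp: fmul_def intro!: A_mult simp: nrm_mult)

lemma V_fadd:
  assumes p: "p \<in> fracs eps w" and q: "q \<in> fracs eps w"
  shows "eventually (\<lambda>n. V (fadd p q) n = V p n + V q n) w"
proof (rule V_ev_eq[OF fadd_fracs[OF p q]])
  show "eventually (\<lambda>n. fst (fadd p q) n = (V p n + V q n) * snd (fadd p q) n) w"
    using V_ev[OF p] V_ev[OF q] by eventually_elim (simp add: fadd_def algebra_simps)
qed

lemma V_fmul:
  assumes p: "p \<in> fracs eps w" and q: "q \<in> fracs eps w"
  shows "eventually (\<lambda>n. V (fmul p q) n = V p n * V q n) w"
proof (rule V_ev_eq[OF fmul_fracs[OF p q]])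
  show "eventually (\<lambda>n. fst (fmul p q) n = (V p n * V q n) * snd (fmul p q) n) w"
    using V_ev[OF p] V_ev[OF q] by eventually_elim (simp add: fmul_def algebra_simps)
qed

lemma pw_one[simp]: "pw (\<lambda>n. 1) n = 1" by (simp add: pw_def)

lemma V_const[simp]: "V (a, \<lambda>n. 1) = a"
  by (rule ext) (simp add: V_def inv_s_def nrm_one)

lemma const_fracs: "a \<in> A \<Longrightarrow> (a, \<lambda>n. 1) \<in> fracs eps w"
  by (rule fracsI) (auto simp: A_const nrm_one)


lemma powr_inv_le:
  fixes a r e :: real
  assumes "0 \<le> a" "0 < e" "a powr e \<le> r"
  shows "a \<le> r powr (1/e)"
proof -
  have "a = (a powr e) powr (1/e)" using assms by (simp add: powr_powr)
  also have "\<dots> \<le> r powr (1/e)" using assms by (intro powr_mono2) auto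
  finally show ?thesis .
qed

lemma pw_diff_add: "pw x n \<le> pw y n + pw (\<lambda>i. x i - y i) n"
  using pw_add[of y "\<lambda>i. x i - y i" n] by simp

lemma le_of_all_inverse:
  fixes a b :: real
  assumes "\<And>m. i \<le> m \<Longrightarrow> a \<le> b + 1 / real (Suc m)"
  shows "a \<le> b"
proof (rule ccontr)
  assume "\<not> a \<le> b"
  then have "0 < a - b" by simp
  then obtain m where m: "inverse (real (Suc m)) < a - b" using reals_Archimedean by blast
  have "1 / real (Suc (max m i)) \<le> 1 / real (Suc m)"
    by (intro divide_left_mono) auto
  with m assms[of "max m i"] show False by (simp add: inverse_eq_divide)
qed

lemma sph_B:
  assumes c: "\<And>k. c k \<in> A" and r: "\<And>k. 0 \<le> r k"
    and nest: "\<And>k y. y \<in> A \<Longrightarrow> nrm (\<lambda>n. y n - c (Suc k) n) \<le> r (Suc k) \<Longrightarrow> nrm (\<lambda>n. y n - c k n) \<le> r k"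
  shows "\<exists>x\<in>A. \<forall>k. nrm (\<lambda>n. x n - c k n) \<le> r k"
proof -
  have cin: "nrm (\<lambda>n. c m n - c k n) \<le> r k" if "k \<le> m" for k m
    using that
  proof (induction k rule: inc_induct)
    case base then show ?case using r nrm_zero by simp
  next
    case (step n) then show ?case using nest c by blast
  qed
  show ?thesis
  proof (cases "\<exists>j0. eventually (\<lambda>n. n = j0) w")
    case True
    then obtain j0 where j0: "eventually (\<lambda>n. n = j0) w" by blast
    have nrmj: "nrm x = pw x j0" for x
    proof (rule nrm_unique)
      show "(pw x \<longlongrightarrow> pw x j0) w"
        by (rule tendsto_eventually) (use j0 in \<open>auto elim: eventually_mono\<close>)
    qed
    define e where "e = eps j0"
    have e: "0 < e" using eps_pos by (simp add: e_def)
    define z where "z m = c m j0" for m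
    have zb: "cmod (z m - z k) \<le> r k powr (1/e)" if "k \<le> m" for k m
      using cin[OF that] e by (intro powr_inv_le) (auto simp: nrmj pw_def z_def e_def)
    have "bounded (range z)"
      unfolding bounded_iff
    proof (intro exI allI ballI)
      fix y assume "y \<in> range z"
      then obtain m where "y = z m" by blast
      then show "norm y \<le> cmod (z 0) + r 0 powr (1/e)"
        using zb[of 0 m] norm_triangle_ineq2[of "z m" "z 0"] by simp
    qed
    then obtain l \<sigma> where \<sigma>: "strict_mono \<sigma>" and lim: "((z \<circ> \<sigma>) \<longlonglongrightarrow> l)"
      using bounded_imp_convergent_subsequence by blast
    have "\<forall>k. nrm (\<lambda>n. l - c k n) \<le> r k"
    proof
      fix k
      have lim2: "((\<lambda>m. cmod (z (\<sigma> m) - z k)) \<longlonglongrightarrow> cmod (l - z k))"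
        using lim by (intro tendsto_intros) (simp add: o_def)
      have "eventually (\<lambda>m. cmod (z (\<sigma> m) - z k) \<le> r k powr (1/e)) sequentially"
        using eventually_ge_at_top[of k]
      proof eventually_elim
        case (elim m) then show ?case using zb seq_suble[OF \<sigma>, of m] by simp
      qed
      then have "cmod (l - z k) \<le> r k powr (1/e)"
        using tendsto_upperbound[OF lim2] by simp
      then have "cmod (l - z k) powr e \<le> (r k powr (1/e)) powr e"
        using e by (intro powr_mono2) auto
      also have "\<dots> = r k" using e r[of k] by (simp add: powr_powr)
      finally show "nrm (\<lambda>n. l - c k n) \<le> r k" by (simp add: nrmj pw_def z_def e_def)
    qed
    then show ?thesis using A_const[of l] by (intro bexI[of _ "\<lambda>n. l"]) auto
  next
    case False
    then have ne: "eventually (\<lambda>n. n \<noteq> j) w" for j using ultraE by blast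
    have ge: "eventually (\<lambda>n. k \<le> n) w" for k
    proof -
      have "eventually (\<lambda>n. \<forall>j\<in>{..<k}. n \<noteq> j) w"
        using ne by (intro eventually_ball_finite) auto
      then show ?thesis by (rule eventually_mono) auto
    qed
    define T where "T k = {n. \<forall>i\<le>k. pw (\<lambda>j. c k j - c i j) n < r i + 1 / real (Suc k)}" for k
    have evT: "eventually (\<lambda>n. n \<in> T k) w" for k
    proof -
      have "eventually (\<lambda>n. \<forall>i\<in>{..k}. pw (\<lambda>j. c k j - c i j) n < r i + 1 / real (Suc k)) w"
      proof (intro eventually_ball_finite ballI)
        fix i assume "i \<in> {..k}"
        have pos: "0 < 1 / real (Suc k)" by simp
        have "i \<le> k" using \<open>i \<in> {..k}\<close> by simp
        then have "nrm (\<lambda>j. c k j - c i j) < r i + 1 / real (Suc k)"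
          using cin[of i k] pos by linarith
        then show "eventually (\<lambda>n. pw (\<lambda>j. c k j - c i j) n < r i + 1 / real (Suc k)) w"
          by (intro nrm_less_ev A_diff c)
      qed auto
      then show ?thesis by (rule eventually_mono) (auto simp: T_def)
    qed
    define D where "D k = {n. k \<le> n \<and> (\<forall>m\<le>k. n \<in> T m)}" for k
    have evD: "eventually (\<lambda>n. n \<in> D k) w" for k
    proof -
      have "eventually (\<lambda>n. \<forall>m\<in>{..k}. n \<in> T m) w"
        using evT by (intro eventually_ball_finite) auto
      with ge[of k] show ?thesis by eventually_elim (auto simp: D_def)
    qed
    have Dmono: "n \<in> D k" if "n \<in> D k'" "k \<le> k'" for n k k'
      using that by (auto simp: D_def)
    define Kn where "Kn n = {k. n \<in> D k}" for n
    have Knfin: "finite (Kn n)" for n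
      by (rule finite_subset[of _ "{..n}"]) (auto simp: Kn_def D_def)
    define x where "x n = (if Kn n = {} then c 0 n else c (Max (Kn n)) n)" for n
    have key: "pw (\<lambda>j. x j - c i j) n \<le> r i + 1 / real (Suc m)"
      if "n \<in> D m" "i \<le> m" for n i m
    proof -
      have ne: "Kn n \<noteq> {}" using that by (auto simp: Kn_def)
      define kk where "kk = Max (Kn n)"
      have "m \<in> Kn n" using that by (simp add: Kn_def)
      then have mk: "m \<le> kk" using Knfin by (simp add: kk_def)
      have "kk \<in> Kn n" using Knfin ne by (simp add: kk_def)
      then have "n \<in> T kk" by (auto simp: Kn_def D_def)
      then have "pw (\<lambda>j. c kk j - c i j) n < r i + 1 / real (Suc kk)"
        using that mk by (auto simp: T_def)
      also have "\<dots> \<le> r i + 1 / real (Suc m)"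
        using mk by (simp add: divide_left_mono)
      finally have "pw (\<lambda>j. c kk j - c i j) n \<le> r i + 1 / real (Suc m)" by simp
      moreover have "x n = c kk n" using ne by (simp add: x_def kk_def)
      ultimately show ?thesis by (simp add: pw_def)
    qed
    obtain M0 where M0: "\<And>n. pw (c 0) n \<le> M0" using A_bound c by metis
    have xA: "x \<in> A"
    proof (rule AI)
      fix n
      show "pw x n \<le> M0 + (r 0 + 1)"
      proof (cases "Kn n = {}")
        case True then show ?thesis using M0[of n] r[of 0] by (simp add: x_def pw_def)
      next
        case False
        then obtain m where "n \<in> D m" by (auto simp: Kn_def)
        then have "pw (\<lambda>j. x j - c 0 j) n \<le> r 0 + 1 / real (Suc m)" using key by blast
        moreover have "1 / real (Suc m) \<le> 1" by simp
        ultimately show ?thesis using pw_diff_add[of x n "c 0"] M0[of n] by linarith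
      qed
    qed
    have "\<forall>i. nrm (\<lambda>n. x n - c i n) \<le> r i"
    proof
      fix i
      show "nrm (\<lambda>n. x n - c i n) \<le> r i"
      proof (rule le_of_all_inverse)
        fix m assume "i \<le> m"
        show "nrm (\<lambda>n. x n - c i n) \<le> r i + 1 / real (Suc m)"
          by (rule nrm_le_ev) (use xA c A_diff evD[of m] key \<open>i \<le> m\<close> in \<open>auto elim!: eventually_mono\<close>)
      qed
    qed
    then show ?thesis using xA by blast
  qed
qed

lemma complete_B:
  assumes v: "\<And>k. v k \<in> A"
    and cau: "\<And>d. d > 0 \<Longrightarrow> \<exists>N. \<forall>m\<ge>N. \<forall>n\<ge>N. nrm (\<lambda>i. v m i - v n i) < d"
  shows "\<exists>x\<in>A. (\<lambda>k. nrm (\<lambda>i. v k i - x i)) \<longlonglongrightarrow> 0"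
proof -
  have "\<exists>N. \<forall>m\<ge>N. \<forall>n\<ge>N. nrm (\<lambda>i. v m i - v n i) < (1/2::real)^(Suc j)" for j
    by (rule cau) simp
  then obtain f where f: "\<And>j m n. f j \<le> m \<Longrightarrow> f j \<le> n \<Longrightarrow> nrm (\<lambda>i. v m i - v n i) < (1/2)^(Suc j)"
    by metis
  define M where "M j = (\<Sum>i\<le>j. f i)" for j
  have M1: "f j \<le> M j" for j unfolding M_def
    by (rule member_le_sum) auto
  have M2: "f j \<le> M (Suc j)" for j using M1[of j] by (simp add: M_def)
  define c where "c j = v (M j)" for j
  define r :: "nat \<Rightarrow> real" where "r j = 2 * (1/2)^j" for j
  have nest: "nrm (\<lambda>n. y n - c j n) \<le> r j"
    if y: "y \<in> A" and h: "nrm (\<lambda>n. y n - c (Suc j) n) \<le> r (Suc j)" for j y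
  proof -
    have h1: "nrm (\<lambda>n. y n - c j n) \<le> nrm (\<lambda>n. y n - c (Suc j) n) + nrm (\<lambda>n. c (Suc j) n - c j n)"
      using nrm_tri y v by (simp add: c_def)
    have h2: "nrm (\<lambda>n. c (Suc j) n - c j n) < (1/2)^(Suc j)"
      unfolding c_def using M1 M2 f by blast
    have "(0::real) \<le> (1/2)^j" "(1/2::real)^(Suc j) = (1/2)^j / 2" by simp_all
    then show ?thesis using h h1 h2 unfolding r_def by linarith
  qed
  obtain x where xA: "x \<in> A" and x: "\<And>j. nrm (\<lambda>n. x n - c j n) \<le> r j"
    using sph_B[of c r] v nest by (auto simp: c_def r_def)
  have bnd: "nrm (\<lambda>i. v k i - x i) < 3 * (1/2)^j" if "f j \<le> k" for j k
  proof -
    have h1: "nrm (\<lambda>i. v k i - x i) \<le> nrm (\<lambda>i. v k i - c j i) + nrm (\<lambda>i. c j i - x i)"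
      using nrm_tri v xA by (simp add: c_def)
    have h2: "nrm (\<lambda>i. v k i - c j i) < (1/2)^(Suc j)"
      unfolding c_def using M1 f that by blast
    have h3: "nrm (\<lambda>i. c j i - x i) \<le> r j" using x[of j] nrm_diff_comm[of x "c j"] by simp
    have "(0::real) \<le> (1/2)^j" "(1/2::real)^(Suc j) = (1/2)^j / 2" by simp_all
    then show ?thesis using h1 h2 h3 unfolding r_def by linarith
  qed
  have "(\<lambda>k. nrm (\<lambda>i. v k i - x i)) \<longlonglongrightarrow> 0"
  proof (rule LIMSEQ_I)
    fix d :: real assume "0 < d"
    then obtain j where j: "(1/2::real)^j < d / 3"
      using real_arch_pow_inv[of "d/3" "1/2::real"] by auto
    have "norm (nrm (\<lambda>i. v k i - x i) - 0) < d" if "f j \<le> k" for k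
      using bnd[OF that] j nrm_nonneg[OF A_diff[OF v xA]] by simp
    then show "\<exists>no. \<forall>k\<ge>no. norm (nrm (\<lambda>i. v k i - x i) - 0) < d" by blast
  qed
  then show ?thesis using xA by blast
qed

abbreviation CS where "CS \<equiv> hcauchy eps w"

definition cs :: "cseq \<Rightarrow> nat \<Rightarrow> frac" where "cs a = (\<lambda>k. (a, \<lambda>n. 1))"
definition cls :: "cseq \<Rightarrow> (nat \<Rightarrow> frac) set" where "cls a = hclass eps w (cs a)"
definition Rel where "Rel s t \<longleftrightarrow> (\<lambda>k. nrm (\<lambda>i. V (s k) i - V (t k) i)) \<longlonglongrightarrow> 0"

lemma CS_iff: "CS s \<longleftrightarrow> (\<forall>k. s k \<in> fracs eps w) \<and>
   (\<forall>d>0. \<exists>N. \<forall>m\<ge>N. \<forall>n\<ge>N. nrm (\<lambda>i. V (s m) i - V (s n) i) < d)"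
  unfolding hcauchy_def by (auto simp: fdist_V)

lemma CS_fracs: "CS s \<Longrightarrow> s k \<in> fracs eps w"
  by (simp add: hcauchy_def)

lemma hclass_iff: "CS s \<Longrightarrow> t \<in> hclass eps w s \<longleftrightarrow> CS t \<and> Rel s t"
  unfolding hclass_def Rel_def by (auto simp: fdist_V CS_fracs)

lemma Rel_refl: "Rel s s"
  by (simp add: Rel_def nrm_zero)

lemma Rel_sym: "Rel s t \<Longrightarrow> Rel t s"
proof -
  have "(\<lambda>k. nrm (\<lambda>i. V (t k) i - V (s k) i)) = (\<lambda>k. nrm (\<lambda>i. V (s k) i - V (t k) i))"
    by (rule ext) (rule nrm_diff_comm)
  then show "Rel s t \<Longrightarrow> Rel t s" unfolding Rel_def by simp
qed

lemma sandwich0: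
  fixes f g :: "nat \<Rightarrow> real"
  assumes "\<And>k. 0 \<le> f k" "\<And>k. f k \<le> g k" "g \<longlonglongrightarrow> 0"
  shows "f \<longlonglongrightarrow> 0"
  by (rule tendsto_sandwich[of "\<lambda>_. 0" f sequentially g]) (use assms in auto)

lemma Rel_trans:
  assumes "CS s" "CS t" "CS u" "Rel s t" "Rel t u"
  shows "Rel s u"
  unfolding Rel_def
proof (rule sandwich0)
  fix k
  have VA: "V (s k) \<in> A" "V (t k) \<in> A" "V (u k) \<in> A" using assms CS_fracs V_A by blast+
  show "0 \<le> nrm (\<lambda>i. V (s k) i - V (u k) i)" using VA A_diff nrm_nonneg by blast
  show "nrm (\<lambda>i. V (s k) i - V (u k) i) \<le> nrm (\<lambda>i. V (s k) i - V (t k) i) + nrm (\<lambda>i. V (t k) i - V (u k) i)"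
    using nrm_tri VA by blast
next
  show "(\<lambda>k. nrm (\<lambda>i. V (s k) i - V (t k) i) + nrm (\<lambda>i. V (t k) i - V (u k) i)) \<longlonglongrightarrow> 0"
    using assms(4,5) tendsto_add[of _ 0 sequentially _ 0] unfolding Rel_def by simp
qed

lemma hclass_eq_iff:
  assumes "CS s" "CS t"
  shows "hclass eps w s = hclass eps w t \<longleftrightarrow> Rel s t"
proof
  assume "hclass eps w s = hclass eps w t"
  moreover have "t \<in> hclass eps w t" using assms hclass_iff Rel_refl by blast
  ultimately show "Rel s t" using assms hclass_iff by blast
next
  assume r: "Rel s t"
  show "hclass eps w s = hclass eps w t"
  proof (intro equalityI subsetI)
    fix u assume "u \<in> hclass eps w s"
    then show "u \<in> hclass eps w t"
      using assms r hclass_iff Rel_trans Rel_sym by meson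
  next
    fix u assume "u \<in> hclass eps w t"
    then show "u \<in> hclass eps w s"
      using assms r hclass_iff Rel_trans Rel_sym by meson
  qed
qed

lemma CS_cs: "a \<in> A \<Longrightarrow> CS (cs a)"
  unfolding CS_iff by (auto simp: cs_def const_fracs nrm_zero)

lemma Rel_cs: "Rel s (cs a) \<longleftrightarrow> (\<lambda>k. nrm (\<lambda>i. V (s k) i - a i)) \<longlonglongrightarrow> 0"
  by (simp add: Rel_def cs_def)

lemma cls_eq_iff:
  assumes "a \<in> A" "b \<in> A"
  shows "cls a = cls b \<longleftrightarrow> nrm (\<lambda>i. a i - b i) = 0"
proof -
  have "cls a = cls b \<longleftrightarrow> Rel (cs a) (cs b)"
    unfolding cls_def using assms CS_cs by (simp add: hclass_eq_iff)
  also have "\<dots> \<longleftrightarrow> nrm (\<lambda>i. a i - b i) = 0"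
    by (simp add: Rel_def cs_def LIMSEQ_const_iff)
  finally show ?thesis .
qed

lemma CS_conv:
  assumes s: "\<And>k. s k \<in> fracs eps w" and x: "x \<in> A"
    and lim: "(\<lambda>k. nrm (\<lambda>i. V (s k) i - x i)) \<longlonglongrightarrow> 0"
  shows "CS s" "hclass eps w s = cls x"
proof -
  show cs: "CS s"
    unfolding CS_iff
  proof (intro conjI allI impI)
    fix d :: real assume "0 < d"
    then obtain N where N: "\<And>k. k \<ge> N \<Longrightarrow> norm (nrm (\<lambda>i. V (s k) i - x i) - 0) < d/2"
      using LIMSEQ_D[OF lim, of "d/2"] by auto
    have "nrm (\<lambda>i. V (s m) i - V (s n) i) < d" if "m \<ge> N" "n \<ge> N" for m n
    proof -
      have VA: "V (s m) \<in> A" "V (s n) \<in> A" using s V_A by blast+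
      have "nrm (\<lambda>i. V (s m) i - V (s n) i) \<le> nrm (\<lambda>i. V (s m) i - x i) + nrm (\<lambda>i. x i - V (s n) i)"
        using nrm_tri VA x by blast
      moreover have "nrm (\<lambda>i. x i - V (s n) i) = nrm (\<lambda>i. V (s n) i - x i)" by (rule nrm_diff_comm)
      ultimately show ?thesis using N[OF that(1)] N[OF that(2)] by simp
    qed
    then show "\<exists>N. \<forall>m\<ge>N. \<forall>n\<ge>N. nrm (\<lambda>i. V (s m) i - V (s n) i) < d" by blast
  qed (use s in blast)
  show "hclass eps w s = cls x"
    unfolding cls_def using cs CS_cs[OF x] lim by (simp add: hclass_eq_iff Rel_cs)
qed

lemma CS_rep: "CS s \<Longrightarrow> \<exists>x\<in>A. Rel s (cs x)"
proof -
  assume cs: "CS s"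
  have "\<exists>x\<in>A. (\<lambda>k. nrm (\<lambda>i. V (s k) i - x i)) \<longlonglongrightarrow> 0"
    by (rule complete_B) (use cs V_A CS_fracs CS_iff in auto)
  then show ?thesis by (simp add: Rel_cs)
qed

lemma carrier_H: "carrier (H eps w) = cls ` A"
proof
  show "carrier (H eps w) \<subseteq> cls ` A"
  proof
    fix U assume "U \<in> carrier (H eps w)"
    then obtain s where s: "CS s" "U = hclass eps w s" by (auto simp: H_def Hcarrier_def)
    then obtain x where "x \<in> A" "Rel s (cs x)" using CS_rep by blast
    then have "U = cls x" using s CS_cs by (simp add: cls_def hclass_eq_iff)
    then show "U \<in> cls ` A" using \<open>x \<in> A\<close> by blast
  qed
  show "cls ` A \<subseteq> carrier (H eps w)"
    using CS_cs by (auto simp: H_def Hcarrier_def cls_def)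
qed

lemma hrep_cls:
  assumes "a \<in> A"
  shows "CS (hrep (cls a))" "(\<lambda>k. nrm (\<lambda>i. V (hrep (cls a) k) i - a i)) \<longlonglongrightarrow> 0"
proof -
  have "cs a \<in> cls a" using CS_cs[OF assms] hclass_iff Rel_refl by (simp add: cls_def)
  then have "hrep (cls a) \<in> cls a" unfolding hrep_def using someI[of "\<lambda>s. s \<in> cls a" "cs a"] by simp
  then have "CS (hrep (cls a)) \<and> Rel (cs a) (hrep (cls a))"
    using CS_cs[OF assms] hclass_iff by (simp add: cls_def)
  then show "CS (hrep (cls a))" "(\<lambda>k. nrm (\<lambda>i. V (hrep (cls a) k) i - a i)) \<longlonglongrightarrow> 0"
    using Rel_sym Rel_cs by blast+
qed

lemma add_cls:
  assumes a: "a \<in> A" and b: "b \<in> A"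
  shows "cls a \<oplus>\<^bsub>H eps w\<^esub> cls b = cls (\<lambda>n. a n + b n)"
proof -
  define s where "s = hrep (cls a)"
  define t where "t = hrep (cls b)"
  note hs = hrep_cls[OF a, folded s_def] and ht = hrep_cls[OF b, folded t_def]
  have sf: "s k \<in> fracs eps w" "t k \<in> fracs eps w" for k
    using CS_fracs[OF hs(1)] CS_fracs[OF ht(1)] by auto
  have "hclass eps w (\<lambda>k. fadd (s k) (t k)) = cls (\<lambda>n. a n + b n)"
  proof (rule CS_conv(2))
    show "fadd (s k) (t k) \<in> fracs eps w" for k using fadd_fracs[OF sf] .
    show "(\<lambda>n. a n + b n) \<in> A" using A_add[OF a b] .
    show "(\<lambda>k. nrm (\<lambda>i. V (fadd (s k) (t k)) i - (a i + b i))) \<longlonglongrightarrow> 0"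
    proof (rule sandwich0)
      fix k
      have d1: "(\<lambda>i. V (s k) i - a i) \<in> A" "(\<lambda>i. V (t k) i - b i) \<in> A"
        using A_diff[OF V_A[OF sf(1)] a] A_diff[OF V_A[OF sf(2)] b] by auto
      have xA: "(\<lambda>i. (V (s k) i - a i) + (V (t k) i - b i)) \<in> A"
        using A_add[OF d1] by simp
      have eq: "nrm (\<lambda>i. V (fadd (s k) (t k)) i - (a i + b i))
          = nrm (\<lambda>i. (V (s k) i - a i) + (V (t k) i - b i))"
        by (rule nrm_cong[OF xA]) (use V_fadd[OF sf] in \<open>auto elim!: eventually_mono\<close>)
      show "0 \<le> nrm (\<lambda>i. V (fadd (s k) (t k)) i - (a i + b i))"
        unfolding eq using nrm_nonneg[OF xA] .
      show "nrm (\<lambda>i. V (fadd (s k) (t k)) i - (a i + b i))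
          \<le> nrm (\<lambda>i. V (s k) i - a i) + nrm (\<lambda>i. V (t k) i - b i)"
        unfolding eq using nrm_add[OF d1] .
    next
      show "(\<lambda>k. nrm (\<lambda>i. V (s k) i - a i) + nrm (\<lambda>i. V (t k) i - b i)) \<longlonglongrightarrow> 0"
        using tendsto_add[OF hs(2) ht(2)] by simp
    qed
  qed
  then show ?thesis by (simp add: H_def s_def t_def)
qed

lemma mult_cls:
  assumes a: "a \<in> A" and b: "b \<in> A"
  shows "cls a \<otimes>\<^bsub>H eps w\<^esub> cls b = cls (\<lambda>n. a n * b n)"
proof -
  define s where "s = hrep (cls a)"
  define t where "t = hrep (cls b)"
  note hs = hrep_cls[OF a, folded s_def] and ht = hrep_cls[OF b, folded t_def]
  have sf: "s k \<in> fracs eps w" "t k \<in> fracs eps w" for k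
    using CS_fracs[OF hs(1)] CS_fracs[OF ht(1)] by auto
  have "hclass eps w (\<lambda>k. fmul (s k) (t k)) = cls (\<lambda>n. a n * b n)"
  proof (rule CS_conv(2))
    show "fmul (s k) (t k) \<in> fracs eps w" for k using fmul_fracs[OF sf] .
    show "(\<lambda>n. a n * b n) \<in> A" using A_mult[OF a b] .
    show "(\<lambda>k. nrm (\<lambda>i. V (fmul (s k) (t k)) i - (a i * b i))) \<longlonglongrightarrow> 0"
    proof (rule sandwich0)
      fix k
      have VA: "V (s k) \<in> A" "V (t k) \<in> A" using V_A[OF sf(1)] V_A[OF sf(2)] by auto
      have d1: "(\<lambda>i. V (s k) i - a i) \<in> A" "(\<lambda>i. V (t k) i - b i) \<in> A"
        using A_diff[OF VA(1) a] A_diff[OF VA(2) b] by auto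
      have m1: "(\<lambda>i. (V (s k) i - a i) * V (t k) i) \<in> A" "(\<lambda>i. a i * (V (t k) i - b i)) \<in> A"
        using A_mult[OF d1(1) VA(2)] A_mult[OF a d1(2)] by auto
      have xA: "(\<lambda>i. (V (s k) i - a i) * V (t k) i + a i * (V (t k) i - b i)) \<in> A"
        using A_add[OF m1] by simp
      have eq: "nrm (\<lambda>i. V (fmul (s k) (t k)) i - (a i * b i))
          = nrm (\<lambda>i. (V (s k) i - a i) * V (t k) i + a i * (V (t k) i - b i))"
        by (rule nrm_cong[OF xA]) (use V_fmul[OF sf] in \<open>auto elim!: eventually_mono simp: algebra_simps\<close>)
      show "0 \<le> nrm (\<lambda>i. V (fmul (s k) (t k)) i - (a i * b i))"
        unfolding eq using nrm_nonneg[OF xA] .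
      have "nrm (\<lambda>i. V (fmul (s k) (t k)) i - (a i * b i))
          \<le> nrm (\<lambda>i. V (s k) i - a i) * nrm (V (t k)) + nrm a * nrm (\<lambda>i. V (t k) i - b i)"
        unfolding eq using nrm_add[OF m1] nrm_mult[OF d1(1) VA(2)] nrm_mult[OF a d1(2)] by simp
      also have "\<dots> \<le> nrm (\<lambda>i. V (s k) i - a i) * (nrm b + nrm (\<lambda>i. V (t k) i - b i)) + nrm a * nrm (\<lambda>i. V (t k) i - b i)"
        using nrm_le_diff[OF VA(2) b] nrm_nonneg[OF d1(1)] nrm_nonneg[OF a] by (intro add_mono mult_left_mono) auto
      finally show "nrm (\<lambda>i. V (fmul (s k) (t k)) i - (a i * b i))
          \<le> nrm (\<lambda>i. V (s k) i - a i) * (nrm b + nrm (\<lambda>i. V (t k) i - b i)) + nrm a * nrm (\<lambda>i. V (t k) i - b i)" .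
    next
      show "(\<lambda>k. nrm (\<lambda>i. V (s k) i - a i) * (nrm b + nrm (\<lambda>i. V (t k) i - b i)) + nrm a * nrm (\<lambda>i. V (t k) i - b i)) \<longlonglongrightarrow> 0"
        using hs(2) ht(2) by (auto intro!: tendsto_eq_intros)
    qed
  qed
  then show ?thesis by (simp add: H_def s_def t_def)
qed

lemma one_H: "\<one>\<^bsub>H eps w\<^esub> = cls (\<lambda>n. 1)"
  by (simp add: H_def cls_def cs_def)

lemma zero_H: "\<zero>\<^bsub>H eps w\<^esub> = cls (\<lambda>n. 0)"
  by (simp add: H_def cls_def cs_def)

lemma Hnorm_cls:
  assumes a: "a \<in> A"
  shows "Hnorm eps w (cls a) = nrm a"
proof -
  define s where "s = hrep (cls a)"
  note hs = hrep_cls[OF a, folded s_def]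
  have sf: "s k \<in> fracs eps w" for k using hs CS_fracs by blast
  have "(\<lambda>k. nrm (V (s k)) - nrm a) \<longlonglongrightarrow> 0"
  proof (rule Lim_null_comparison[OF _ hs(2)])
    show "eventually (\<lambda>k. norm (nrm (V (s k)) - nrm a) \<le> nrm (\<lambda>i. V (s k) i - a i)) sequentially"
      using nrm_abs_diff V_A sf a by (auto intro: always_eventually)
  qed
  then have "(\<lambda>k. (nrm (V (s k)) - nrm a) + nrm a) \<longlonglongrightarrow> 0 + nrm a"
    by (intro tendsto_add) auto
  then have "(\<lambda>k. fnorm eps w (s k)) \<longlonglongrightarrow> nrm a"
    using fnorm_V sf by simp
  then show ?thesis by (simp add: Hnorm_def s_def limI)
qed

lemma cls_carrier[simp]: "a \<in> A \<Longrightarrow> cls a \<in> carrier (H eps w)"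
  by (simp add: carrier_H)

lemma carrierE:
  assumes "x \<in> carrier (H eps w)" obtains a where "a \<in> A" "x = cls a"
  using assms by (auto simp: carrier_H)

lemmas Asimps = A_add A_mult A_minus A_const A_diff

lemma H_cring: "cring (H eps w)"
proof (rule cringI)
  show "abelian_group (H eps w)"
  proof (rule abelian_groupI)
    fix x y assume "x \<in> carrier (H eps w)" "y \<in> carrier (H eps w)"
    then show "x \<oplus>\<^bsub>H eps w\<^esub> y \<in> carrier (H eps w)"
      by (auto elim!: carrierE simp: add_cls Asimps)
  next
    show "\<zero>\<^bsub>H eps w\<^esub> \<in> carrier (H eps w)" by (simp add: zero_H A_const)
  next
    fix x y z assume "x \<in> carrier (H eps w)" "y \<in> carrier (H eps w)" "z \<in> carrier (H eps w)"
    then show "x \<oplus>\<^bsub>H eps w\<^esub> y \<oplus>\<^bsub>H eps w\<^esub> z = x \<oplus>\<^bsub>H eps w\<^esub> (y \<oplus>\<^bsub>H eps w\<^esub> z)"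
      by (auto elim!: carrierE simp: add_cls Asimps add.assoc)
  next
    fix x y assume "x \<in> carrier (H eps w)" "y \<in> carrier (H eps w)"
    then show "x \<oplus>\<^bsub>H eps w\<^esub> y = y \<oplus>\<^bsub>H eps w\<^esub> x"
      by (auto elim!: carrierE simp: add_cls Asimps add.commute)
  next
    fix x assume "x \<in> carrier (H eps w)"
    then show "\<zero>\<^bsub>H eps w\<^esub> \<oplus>\<^bsub>H eps w\<^esub> x = x"
      by (auto elim!: carrierE simp: add_cls zero_H Asimps)
  next
    fix x assume "x \<in> carrier (H eps w)"
    then obtain a where a: "a \<in> A" "x = cls a" by (rule carrierE)
    have "cls (\<lambda>n. - a n) \<oplus>\<^bsub>H eps w\<^esub> x = \<zero>\<^bsub>H eps w\<^esub>"
      using a by (simp add: add_cls zero_H Asimps)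
    then show "\<exists>y\<in>carrier (H eps w). y \<oplus>\<^bsub>H eps w\<^esub> x = \<zero>\<^bsub>H eps w\<^esub>"
      using a by (intro bexI[of _ "cls (\<lambda>n. - a n)"]) (auto simp: Asimps)
  qed
next
  show "comm_monoid (H eps w)"
  proof (rule comm_monoidI)
    fix x y assume "x \<in> carrier (H eps w)" "y \<in> carrier (H eps w)"
    then show "x \<otimes>\<^bsub>H eps w\<^esub> y \<in> carrier (H eps w)"
      by (auto elim!: carrierE simp: mult_cls Asimps)
  next
    show "\<one>\<^bsub>H eps w\<^esub> \<in> carrier (H eps w)" by (simp add: one_H A_const)
  next
    fix x y z assume "x \<in> carrier (H eps w)" "y \<in> carrier (H eps w)" "z \<in> carrier (H eps w)"
    then show "x \<otimes>\<^bsub>H eps w\<^esub> y \<otimes>\<^bsub>H eps w\<^esub> z = x \<otimes>\<^bsub>H eps w\<^esub> (y \<otimes>\<^bsub>H eps w\<^esub> z)"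
      by (auto elim!: carrierE simp: mult_cls Asimps mult.assoc)
  next
    fix x assume "x \<in> carrier (H eps w)"
    then show "\<one>\<^bsub>H eps w\<^esub> \<otimes>\<^bsub>H eps w\<^esub> x = x"
      by (auto elim!: carrierE simp: mult_cls one_H Asimps)
  next
    fix x y assume "x \<in> carrier (H eps w)" "y \<in> carrier (H eps w)"
    then show "x \<otimes>\<^bsub>H eps w\<^esub> y = y \<otimes>\<^bsub>H eps w\<^esub> x"
      by (auto elim!: carrierE simp: mult_cls Asimps mult.commute)
  qed
next
  fix x y z assume "x \<in> carrier (H eps w)" "y \<in> carrier (H eps w)" "z \<in> carrier (H eps w)"
  then show "(x \<oplus>\<^bsub>H eps w\<^esub> y) \<otimes>\<^bsub>H eps w\<^esub> z = x \<otimes>\<^bsub>H eps w\<^esub> z \<oplus>\<^bsub>H eps w\<^esub> y \<otimes>\<^bsub>H eps w\<^esub> z"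
    by (auto elim!: carrierE simp: mult_cls add_cls Asimps distrib_right)
qed

lemma cls_zero_iff: "a \<in> A \<Longrightarrow> cls a = \<zero>\<^bsub>H eps w\<^esub> \<longleftrightarrow> nrm a = 0"
  by (simp add: zero_H cls_eq_iff A_const)

lemma H_field: "field (H eps w)"
proof -
  interpret cring "H eps w" by (rule H_cring)
  show ?thesis
  proof (rule field_intro2)
    have "nrm (\<lambda>i. 0 - 1) = 1" using nrm_minus[of "\<lambda>i. 1"] nrm_one by simp
    then show "\<zero>\<^bsub>H eps w\<^esub> \<noteq> \<one>\<^bsub>H eps w\<^esub>"
      by (simp add: zero_H one_H cls_eq_iff A_const)
  next
    fix x assume x: "x \<in> carrier (H eps w) - {\<zero>\<^bsub>H eps w\<^esub>}"
    then obtain a where a: "a \<in> A" "x = cls a" by (auto elim: carrierE)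
    then have na: "nrm a \<noteq> 0" using x cls_zero_iff by auto
    have iA: "inv_s a \<in> A" using inv_s_A a na by blast
    have "nrm (\<lambda>i. inv_s a i * a i - 1) = 0"
      by (rule nrm_ev0) (use inv_s_ev[OF a(1) na] in \<open>auto elim!: eventually_mono\<close>)
    then have e1: "cls (inv_s a) \<otimes>\<^bsub>H eps w\<^esub> x = \<one>\<^bsub>H eps w\<^esub>"
      using a iA by (simp add: mult_cls one_H cls_eq_iff Asimps)
    then have e2: "x \<otimes>\<^bsub>H eps w\<^esub> cls (inv_s a) = \<one>\<^bsub>H eps w\<^esub>"
      using a iA m_comm by simp
    show "x \<in> Units (H eps w)"
      unfolding Units_def using e1 e2 x iA by auto
  qed
qed

lemma Hnorm_nonneg: "x \<in> carrier (H eps w) \<Longrightarrow> 0 \<le> Hnorm eps w x"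
  by (auto elim!: carrierE simp: Hnorm_cls nrm_nonneg)

lemma H_metrized: "metrized_field (H eps w) (Hnorm eps w)"
  unfolding metrized_field_def
proof (intro conjI ballI)
  show "field (H eps w)" by (rule H_field)
next
  fix x assume "x \<in> carrier (H eps w)"
  then obtain a where a: "a \<in> A" "x = cls a" by (rule carrierE)
  show "0 \<le> Hnorm eps w x" using a by (simp add: Hnorm_cls nrm_nonneg)
  show "(Hnorm eps w x = 0) = (x = \<zero>\<^bsub>H eps w\<^esub>)" using a by (simp add: Hnorm_cls cls_zero_iff)
next
  fix x y assume "x \<in> carrier (H eps w)" "y \<in> carrier (H eps w)"
  then obtain a b where a: "a \<in> A" "x = cls a" and b: "b \<in> A" "y = cls b" by (metis carrierE)
  show "Hnorm eps w (x \<otimes>\<^bsub>H eps w\<^esub> y) = Hnorm eps w x * Hnorm eps w y"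
    using a b by (simp add: mult_cls Hnorm_cls Asimps nrm_mult)
  show "Hnorm eps w (x \<oplus>\<^bsub>H eps w\<^esub> y) \<le> Hnorm eps w x + Hnorm eps w y"
    using a b by (simp add: add_cls Hnorm_cls Asimps nrm_add)
qed

lemma minus_cls:
  assumes a: "a \<in> A" and b: "b \<in> A"
  shows "cls a \<ominus>\<^bsub>H eps w\<^esub> cls b = cls (\<lambda>n. a n - b n)"
proof -
  interpret cring "H eps w" by (rule H_cring)
  have "cls (\<lambda>n. - b n) \<oplus>\<^bsub>H eps w\<^esub> cls b = \<zero>\<^bsub>H eps w\<^esub>"
    using b by (simp add: add_cls zero_H Asimps)
  then have "\<ominus>\<^bsub>H eps w\<^esub> cls b = cls (\<lambda>n. - b n)"
    using b by (intro minus_equality) (auto simp: Asimps)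
  then show ?thesis using a b by (simp add: minus_eq add_cls Asimps)
qed

lemma Hnorm_minus_cls:
  "a \<in> A \<Longrightarrow> b \<in> A \<Longrightarrow> Hnorm eps w (cls a \<ominus>\<^bsub>H eps w\<^esub> cls b) = nrm (\<lambda>n. a n - b n)"
  by (simp add: minus_cls Hnorm_cls A_diff)

lemma H_sph: "spherically_complete (H eps w) (Hnorm eps w)"
  unfolding spherically_complete_def
proof (intro allI impI)
  fix c r
  assume h: "(\<forall>n. c n \<in> carrier (H eps w) \<and> 0 \<le> r n) \<and>
     (\<forall>n. closed_ball_in (H eps w) (Hnorm eps w) (c (Suc n)) (r (Suc n))
          \<subseteq> closed_ball_in (H eps w) (Hnorm eps w) (c n) (r n))"
  define a where "a n = (SOME x. x \<in> A \<and> c n = cls x)" for n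
  have a: "a n \<in> A \<and> c n = cls (a n)" for n
  proof -
    obtain x where "x \<in> A" "c n = cls x" using h carrierE by metis
    then show ?thesis unfolding a_def using someI[of "\<lambda>x. x \<in> A \<and> c n = cls x" x] by blast
  qed
  have ball: "cls y \<in> closed_ball_in (H eps w) (Hnorm eps w) (c n) (r n) \<longleftrightarrow> nrm (\<lambda>i. y i - a n i) \<le> r n"
    if "y \<in> A" for y n
    using that a[of n] by (simp add: closed_ball_in_def Hnorm_minus_cls)
  obtain x where x: "x \<in> A" "\<And>k. nrm (\<lambda>i. x i - a k i) \<le> r k"
  proof -
    have "\<exists>x\<in>A. \<forall>k. nrm (\<lambda>n. x n - a k n) \<le> r k"
    proof (rule sph_B)
      show "a k \<in> A" for k using a by blast
      show "0 \<le> r k" for k using h by blast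
      fix k y assume "y \<in> A" "nrm (\<lambda>n. y n - a (Suc k) n) \<le> r (Suc k)"
      then have "cls y \<in> closed_ball_in (H eps w) (Hnorm eps w) (c (Suc k)) (r (Suc k))"
        using ball by blast
      then have "cls y \<in> closed_ball_in (H eps w) (Hnorm eps w) (c k) (r k)" using h by blast
      then show "nrm (\<lambda>n. y n - a k n) \<le> r k" using ball \<open>y \<in> A\<close> by blast
    qed
    then show ?thesis using that by blast
  qed
  then have "cls x \<in> (\<Inter>n. closed_ball_in (H eps w) (Hnorm eps w) (c n) (r n))"
    using ball by blast
  then show "(\<Inter>n. closed_ball_in (H eps w) (Hnorm eps w) (c n) (r n)) \<noteq> {}" by blast
qed

lemma H_image: "Hnorm eps w ` carrier (H eps w) = {0..}"
proof
  show "Hnorm eps w ` carrier (H eps w) \<subseteq> {0..}" using Hnorm_nonneg by auto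
  show "{0..} \<subseteq> Hnorm eps w ` carrier (H eps w)"
  proof
    fix t :: real assume "t \<in> {0..}"
    then have t: "0 \<le> t" by simp
    define a where "a n = complex_of_real (t powr (1 / eps n))" for n
    have pwa: "pw a n = t" for n
      using t eps_pos[of n] by (simp add: a_def pw_def powr_powr)
    have aA: "a \<in> A" using pwa by (intro AI[of _ t]) simp
    have "nrm a = t" by (rule nrm_unique) (simp add: pwa[abs_def])
    then have "Hnorm eps w (cls a) = t" using aA by (simp add: Hnorm_cls)
    then show "t \<in> Hnorm eps w ` carrier (H eps w)" using aA by force
  qed
qed

lemma H_nonarch:
  assumes e0: "(eps \<longlongrightarrow> 0) w"
  shows "non_archimedean (H eps w) (Hnorm eps w)"
  unfolding non_archimedean_def
proof (intro ballI)
  fix x y assume "x \<in> carrier (H eps w)" "y \<in> carrier (H eps w)"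
  then obtain a b where a: "a \<in> A" "x = cls a" and b: "b \<in> A" "y = cls b" by (metis carrierE)
  have pt: "pw (\<lambda>n. a n + b n) n \<le> 2 powr eps n * max (pw a n) (pw b n)" for n
  proof -
    have e: "0 < eps n" by (rule eps_pos)
    have "cmod (a n + b n) \<le> 2 * max (cmod (a n)) (cmod (b n))"
      using norm_triangle_ineq[of "a n" "b n"] by linarith
    then have "cmod (a n + b n) powr eps n \<le> (2 * max (cmod (a n)) (cmod (b n))) powr eps n"
      using e by (intro powr_mono2) auto
    also have "\<dots> = 2 powr eps n * max (cmod (a n)) (cmod (b n)) powr eps n"
      by (simp add: powr_mult)
    also have "max (cmod (a n)) (cmod (b n)) powr eps n = max (pw a n) (pw b n)"
    proof (cases "cmod (a n) \<le> cmod (b n)")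
      case True
      then have "pw a n \<le> pw b n" using e by (simp add: pw_def powr_mono2)
      then show ?thesis using True by (simp add: max_absorb2 pw_def)
    next
      case False
      then have "pw b n \<le> pw a n" using e by (simp add: pw_def powr_mono2)
      then show ?thesis using False by (simp add: max_absorb1 pw_def)
    qed
    finally show ?thesis by (simp add: pw_def)
  qed
  have lim: "((\<lambda>n. 2 powr eps n * max (pw a n) (pw b n)) \<longlongrightarrow> 2 powr 0 * max (nrm a) (nrm b)) w"
    by (intro tendsto_mult tendsto_max nrm_tendsto tendsto_powr e0 a b tendsto_const) simp
  have "nrm (\<lambda>n. a n + b n) \<le> 2 powr 0 * max (nrm a) (nrm b)"
    by (rule tendsto_le[OF w_nontriv lim nrm_tendsto[OF A_add[OF a(1) b(1)]]])
       (auto intro: always_eventually pt)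
  then show "Hnorm eps w (x \<oplus>\<^bsub>H eps w\<^esub> y) \<le> max (Hnorm eps w x) (Hnorm eps w y)"
    using a b by (simp add: add_cls Hnorm_cls Asimps)
qed

context
  fixes e :: real
  assumes ee: "(eps \<longlongrightarrow> e) w" and epos: "0 < e"
begin

lemma ev_eps: "eventually (\<lambda>n. e/2 < eps n) w"
  using order_tendstoD(1)[OF ee, of "e/2"] epos by simp

lemma A_bounded_ev:
  assumes "x \<in> A" shows "\<exists>B. eventually (\<lambda>n. cmod (x n) \<le> B) w"
proof -
  obtain M where M: "0 \<le> M" "\<And>n. pw x n \<le> M" using A_bound assms by metis
  define M' where "M' = max 1 M"
  have M'1: "1 \<le> M'" by (simp add: M'_def)
  have "eventually (\<lambda>n. cmod (x n) \<le> M' powr (2/e)) w"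
    using ev_eps
  proof eventually_elim
    case (elim n)
    have en: "0 < eps n" by (rule eps_pos)
    show ?case
    proof (cases "cmod (x n) \<le> 1")
      case True
      moreover have "1 \<le> M' powr (2/e)" using epos M'1 by (intro ge_one_powr_ge_zero) auto
      ultimately show ?thesis by linarith
    next
      case False
      have ie: "1 / eps n \<le> 2 / e" using elim en epos by (simp add: field_simps)
      have "cmod (x n) \<le> pw x n powr (1/eps n)" using en by (intro powr_inv_le) (auto simp: pw_def)
      also have "\<dots> \<le> M' powr (1/eps n)" using en by (intro powr_mono2) (use M(2)[of n] in \<open>auto simp: M'_def le_max_iff_disj\<close>)
      also have "\<dots> \<le> M' powr (2/e)" using ie M'1 by (intro powr_mono) auto
      finally show ?thesis .
    qed
  qed
  then show ?thesis by blast
qed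

definition ulim :: "cseq \<Rightarrow> complex" where "ulim x = Lim w x"

lemma ulim_tendsto:
  assumes "x \<in> A" shows "(x \<longlongrightarrow> ulim x) w"
proof -
  obtain B where B: "eventually (\<lambda>n. cmod (x n) \<le> B) w" using A_bounded_ev assms by blast
  have "\<exists>l\<in>cball 0 B. (x \<longlongrightarrow> l) w"
    by (rule ultra_tendsto_exists[OF ultra compact_cball]) (use B in \<open>auto elim!: eventually_mono\<close>)
  then obtain l where l: "(x \<longlongrightarrow> l) w" by blast
  then have "Lim w x = l" using tendsto_Lim w_nontriv by blast
  then show ?thesis using l by (simp add: ulim_def)
qed

lemma ulim_unique: "(x \<longlongrightarrow> l) w \<Longrightarrow> ulim x = l"
  using tendsto_Lim w_nontriv by (simp add: ulim_def)

lemma nrm_ulim: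
  assumes "x \<in> A" shows "nrm x = cmod (ulim x) powr e"
proof (rule nrm_unique)
  have "((\<lambda>n. cmod (x n) powr eps n) \<longlongrightarrow> cmod (ulim x) powr e) w"
    by (rule tendsto_powr'[OF tendsto_norm[OF ulim_tendsto[OF assms]] ee]) (use epos in auto)
  then show "(pw x \<longlongrightarrow> cmod (ulim x) powr e) w" by (simp add: pw_fun)
qed

lemma ulim_add: "x \<in> A \<Longrightarrow> y \<in> A \<Longrightarrow> ulim (\<lambda>n. x n + y n) = ulim x + ulim y"
  by (intro ulim_unique tendsto_add ulim_tendsto)

lemma ulim_mult: "x \<in> A \<Longrightarrow> y \<in> A \<Longrightarrow> ulim (\<lambda>n. x n * y n) = ulim x * ulim y"
  by (intro ulim_unique tendsto_mult ulim_tendsto)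

lemma ulim_diff: "x \<in> A \<Longrightarrow> y \<in> A \<Longrightarrow> ulim (\<lambda>n. x n - y n) = ulim x - ulim y"
  by (intro ulim_unique tendsto_diff ulim_tendsto)

lemma ulim_const: "ulim (\<lambda>n. z) = z"
  by (intro ulim_unique tendsto_const)

lemma ulim_eq_iff:
  assumes "a \<in> A" "b \<in> A"
  shows "ulim a = ulim b \<longleftrightarrow> nrm (\<lambda>n. a n - b n) = 0"
  using nrm_ulim[OF A_diff[OF assms]] ulim_diff[OF assms] epos by simp

definition phi where "phi U = ulim (SOME x. x \<in> A \<and> U = cls x)"

lemma phi_cls:
  assumes a: "a \<in> A" shows "phi (cls a) = ulim a"
proof -
  define b where "b = (SOME x. x \<in> A \<and> cls a = cls x)"
  have b: "b \<in> A \<and> cls a = cls b"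
    unfolding b_def using someI[of "\<lambda>x. x \<in> A \<and> cls a = cls x" a] a by blast
  then have "nrm (\<lambda>n. b n - a n) = 0" using a cls_eq_iff by metis
  then have "ulim b = ulim a" using ulim_eq_iff a b by blast
  then show ?thesis by (simp add: phi_def b_def)
qed

lemma phi_iso: "phi \<in> ring_iso (H eps w) C_ring"
  unfolding ring_iso_def
proof (intro CollectI conjI)
  show "phi \<in> ring_hom (H eps w) C_ring"
    unfolding ring_hom_def
  proof (intro CollectI conjI allI impI)
    show "phi \<in> carrier (H eps w) \<rightarrow> carrier C_ring" by (simp add: C_ring_def)
  next
    fix x y assume "x \<in> carrier (H eps w) \<and> y \<in> carrier (H eps w)"
    then obtain a b where a: "a \<in> A" "x = cls a" and b: "b \<in> A" "y = cls b" by (metis carrierE)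
    show "phi (x \<otimes>\<^bsub>H eps w\<^esub> y) = phi x \<otimes>\<^bsub>C_ring\<^esub> phi y"
      using a b by (simp add: mult_cls phi_cls Asimps ulim_mult C_ring_def)
    show "phi (x \<oplus>\<^bsub>H eps w\<^esub> y) = phi x \<oplus>\<^bsub>C_ring\<^esub> phi y"
      using a b by (simp add: add_cls phi_cls Asimps ulim_add C_ring_def)
  next
    show "phi \<one>\<^bsub>H eps w\<^esub> = \<one>\<^bsub>C_ring\<^esub>"
      by (simp add: one_H phi_cls A_const ulim_const C_ring_def)
  qed
  show "bij_betw phi (carrier (H eps w)) (carrier C_ring)"
  proof (rule bij_betwI')
    fix x y assume "x \<in> carrier (H eps w)" "y \<in> carrier (H eps w)"
    then obtain a b where a: "a \<in> A" "x = cls a" and b: "b \<in> A" "y = cls b" by (metis carrierE)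
    show "(phi x = phi y) = (x = y)"
      using a b by (simp add: phi_cls ulim_eq_iff cls_eq_iff)
  next
    fix x assume "x \<in> carrier (H eps w)"
    then show "phi x \<in> carrier C_ring" by (simp add: C_ring_def)
  next
    fix z assume "z \<in> carrier C_ring"
    have "phi (cls (\<lambda>n. z)) = z" by (simp add: phi_cls A_const ulim_const)
    then show "\<exists>x\<in>carrier (H eps w). z = phi x" using A_const[of z] by (intro bexI[of _ "cls (\<lambda>n. z)"]) auto
  qed
qed

lemma Hnorm_phi: "U \<in> carrier (H eps w) \<Longrightarrow> Hnorm eps w U = cmod (phi U) powr e"
  by (auto elim!: carrierE simp: Hnorm_cls phi_cls nrm_ulim)

lemma H_not_nonarch: "\<not> non_archimedean (H eps w) (Hnorm eps w)"
proof
  assume na: "non_archimedean (H eps w) (Hnorm eps w)"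
  have one: "\<one>\<^bsub>H eps w\<^esub> \<in> carrier (H eps w)" by (simp add: one_H A_const)
  have "Hnorm eps w (\<one>\<^bsub>H eps w\<^esub> \<oplus>\<^bsub>H eps w\<^esub> \<one>\<^bsub>H eps w\<^esub>) = 2 powr e"
    by (simp add: one_H add_cls A_const Hnorm_cls nrm_ulim ulim_const)
  moreover have "Hnorm eps w \<one>\<^bsub>H eps w\<^esub> = 1"
    by (simp add: one_H A_const Hnorm_cls nrm_one)
  moreover have "1 < (2::real) powr e"
    using powr_less_mono[of 0 e 2] epos by simp
  ultimately show False using na one unfolding non_archimedean_def by fastforce
qed


end

lemma A_pow: "a \<in> A \<Longrightarrow> (\<lambda>k. a k ^ n) \<in> A"
proof (induction n)
  case 0 then show ?case using A_const by simp
next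
  case (Suc n) then show ?case using A_mult[of "\<lambda>k. a k ^ n" a] by (simp add: mult.commute)
qed

lemma pow_cls: "a \<in> A \<Longrightarrow> cls a [^]\<^bsub>H eps w\<^esub> (n::nat) = cls (\<lambda>k. a k ^ n)"
proof (induction n)
  case 0 then show ?case by (simp add: one_H)
next
  case (Suc n) then show ?case by (simp add: mult_cls A_pow mult.commute)
qed

lemma eval_cls:
  assumes "\<forall>q\<in>set qs. q \<in> A" "z \<in> A"
  shows "(\<lambda>n. heval (map (\<lambda>q. q n) qs) (z n)) \<in> A \<and>
    ring.eval (H eps w) (map cls qs) (cls z) = cls (\<lambda>n. heval (map (\<lambda>q. q n) qs) (z n))"
  using assms(1)
proof (induction qs)
  case Nil
  interpret field "H eps w" by (rule H_field)
  show ?case by (simp add: A_const zero_H)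
next
  case (Cons q qs)
  interpret field "H eps w" by (rule H_field)
  have q: "q \<in> A" and IH: "(\<lambda>n. heval (map (\<lambda>q. q n) qs) (z n)) \<in> A"
    "eval (map cls qs) (cls z) = cls (\<lambda>n. heval (map (\<lambda>q. q n) qs) (z n))"
    using Cons by auto
  have m: "(\<lambda>n. q n * z n ^ length qs) \<in> A" using A_mult[OF q A_pow[OF assms(2)]] .
  have "eval (map cls (q # qs)) (cls z) = cls q \<otimes>\<^bsub>H eps w\<^esub> cls z [^]\<^bsub>H eps w\<^esub> length qs \<oplus>\<^bsub>H eps w\<^esub> eval (map cls qs) (cls z)"
    by simp
  also have "\<dots> = cls (\<lambda>n. q n * z n ^ length qs + heval (map (\<lambda>q. q n) qs) (z n))"
    using q assms(2) IH m by (simp add: pow_cls mult_cls add_cls A_pow)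
  finally show ?case using A_add[OF m IH(1)] by simp
qed

lemma A_list_bound:
  assumes "\<forall>q\<in>set qs. q \<in> A"
  shows "\<exists>M. \<forall>q\<in>set qs. \<forall>n. pw q n \<le> M"
  using assms
proof (induction qs)
  case Nil then show ?case by simp
next
  case (Cons q qs)
  then obtain M where M: "\<forall>q\<in>set qs. \<forall>n. pw q n \<le> M" by auto
  obtain M1 where M1: "\<And>n. pw q n \<le> M1" using A_bound Cons.prems by (metis list.set_intros(1))
  show ?case
    by (rule exI[of _ "max M M1"]) (use M M1 in \<open>auto simp: le_max_iff_disj\<close>)
qed

lemma H_alg_closed: "algebraically_closed (H eps w)"
proof -
  interpret field "H eps w" by (rule H_field)
  show ?thesis
  proof (rule algebraically_closedI, goal_cases)
    case (1 p)
    then have pp: "polynomial\<^bsub>H eps w\<^esub> (carrier (H eps w)) p" by (simp add: univ_poly_carrier)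
    have pne: "p \<noteq> []" using 1 by auto
    then have pset: "set p \<subseteq> carrier (H eps w)" and phd: "hd p \<noteq> \<zero>\<^bsub>H eps w\<^esub>"
      using pp by (auto simp: polynomial_def)
    define rep where "rep U = (SOME x. x \<in> A \<and> U = cls x)" for U
    have rep: "rep U \<in> A \<and> U = cls (rep U)" if U: "U \<in> carrier (H eps w)" for U
    proof -
      obtain x where "x \<in> A" "U = cls x" by (rule carrierE[OF U])
      then show ?thesis unfolding rep_def using someI[of "\<lambda>x. x \<in> A \<and> U = cls x" x] by blast
    qed
    define qs where "qs = map rep p"
    have qsA: "\<forall>q\<in>set qs. q \<in> A" using rep pset by (auto simp: qs_def)
    have pqs: "p = map cls qs"
      unfolding qs_def map_map by (rule map_idI[symmetric]) (use rep pset in \<open>auto simp: o_def\<close>)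
    have qne: "qs \<noteq> []" using pne by (simp add: qs_def)
    define c0 where "c0 = hd qs"
    have c0A: "c0 \<in> A" using qsA qne by (simp add: c0_def)
    have "cls c0 = hd p" using pqs qne by (simp add: c0_def hd_map)
    then have nc0: "nrm c0 \<noteq> 0" using phd c0A cls_zero_iff by auto
    then have nc0p: "0 < nrm c0" using nrm_pos c0A by blast
    define rest where "rest = tl qs"
    have qs_eq: "qs = c0 # rest" using qne by (simp add: c0_def rest_def)
    have lq: "2 \<le> length qs" using 1 by (simp add: pqs)
    then have rne: "rest \<noteq> []" using qs_eq by auto
    obtain M where M: "\<forall>q\<in>set qs. \<forall>n. pw q n \<le> M" using A_list_bound qsA by blast
    define L where "L n = map (\<lambda>q. q n) qs" for n
    define S where "S n \<longleftrightarrow> nrm c0 / 2 < pw c0 n" for n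
    have evS: "eventually S w" unfolding S_def using nrm_gt_ev[OF c0A, of "nrm c0 / 2"] nc0p by simp
    have S0: "c0 n \<noteq> 0" if "S n" for n
    proof
      assume "c0 n = 0" then have "pw c0 n = 0" by (simp add: pw_def)
      with that nc0p show False by (simp add: S_def)
    qed
    define z where "z n = (if S n then (SOME y. heval (L n) y = 0) else 0)" for n
    have zroot: "heval (L n) (z n) = 0" if "S n" for n
    proof -
      have "\<exists>y. heval (L n) y = 0"
        by (rule heval_root) (use S0[OF that] lq in \<open>auto simp: L_def qs_eq\<close>)
      then have "heval (L n) (SOME y. heval (L n) y = 0) = 0" by (rule someI_ex)
      then show ?thesis using that by (simp add: z_def)
    qed
    define T where "T = real (length rest) * M / (nrm c0 / 2)"
    have zA: "z \<in> A"
    proof (rule AI)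
      fix n
      show "pw z n \<le> 1 + T"
      proof (cases "S n")
        case False
        have "0 \<le> M" using M qs_eq pw_nonneg[of c0 0] by (metis list.set_intros(1) order_trans)
        then have "0 \<le> T" using nc0p by (simp add: T_def)
        then show ?thesis using False by (simp add: z_def pw_def)
      next
        case True
        have en: "0 < eps n" "eps n \<le> 1" using eps_pos eps_le1 by auto
        define Q where "Q = sum_list (map cmod (map (\<lambda>q. q n) rest)) / cmod (c0 n)"
        have Q0: "0 \<le> Q" unfolding Q_def by (intro divide_nonneg_nonneg sum_list_nonneg) auto
        have "heval (c0 n # map (\<lambda>q. q n) rest) (z n) = 0"
          using zroot[OF True] by (simp add: L_def qs_eq)
        then have zb: "cmod (z n) \<le> max 1 Q"
          unfolding Q_def using S0[OF True] rne by (intro root_bound) auto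
        have "pw z n \<le> (max 1 Q) powr eps n"
          unfolding pw_def using zb en by (intro powr_mono2) auto
        also have "\<dots> \<le> 1 + Q powr eps n"
          by (cases "Q \<le> 1") (auto simp: max_def)
        also have "Q powr eps n \<le> T"
        proof -
          have "Q powr eps n = (sum_list (map cmod (map (\<lambda>q. q n) rest))) powr eps n / pw c0 n"
            by (simp add: Q_def powr_divide pw_def)
          also have "\<dots> \<le> sum_list (map (\<lambda>x. x powr eps n) (map cmod (map (\<lambda>q. q n) rest))) / pw c0 n"
            using True nc0p en by (intro divide_right_mono powr_sum_list_subadd) (auto simp: S_def)
          also have "sum_list (map (\<lambda>x. x powr eps n) (map cmod (map (\<lambda>q. q n) rest))) = sum_list (map (\<lambda>q. pw q n) rest)"
            by (simp add: pw_def o_def)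
          also have "sum_list (map (\<lambda>q. pw q n) rest) \<le> real (length rest) * M"
            by (rule sum_list_bound) (use M qs_eq in auto)
          finally have "Q powr eps n \<le> real (length rest) * M / pw c0 n"
            using True nc0p by (simp add: S_def divide_right_mono)
          also have "\<dots> \<le> real (length rest) * M / (nrm c0 / 2)"
          proof (rule divide_left_mono)
            have "0 \<le> M" using M qs_eq pw_nonneg[of c0 0] by (metis list.set_intros(1) order_trans)
            then show "0 \<le> real (length rest) * M" by simp
            show "nrm c0 / 2 \<le> pw c0 n" using True by (simp add: S_def)
            show "0 < pw c0 n * (nrm c0 / 2)" using True nc0p by (simp add: S_def)
          qed
          finally show ?thesis by (simp add: T_def)
        qed
        finally show ?thesis by simp
      qed
    qed
    have ev: "eval p (cls z) = cls (\<lambda>n. heval (L n) (z n))"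
      and hA: "(\<lambda>n. heval (L n) (z n)) \<in> A"
      using eval_cls[OF qsA zA] by (simp_all add: pqs L_def)
    have "nrm (\<lambda>n. heval (L n) (z n)) = 0"
      by (rule nrm_ev0) (use evS zroot in \<open>auto elim!: eventually_mono\<close>)
    then have "eval p (cls z) = \<zero>\<^bsub>H eps w\<^esub>" using ev hA cls_zero_iff by simp
    then show ?case using zA by (intro bexI[of _ "cls z"]) auto
  qed
qed
end

theorem mainTheorem6:
  fixes eps :: "nat \<Rightarrow> real" and w :: "nat filter"
  assumes eps_range: "\<forall>n. 0 < eps n \<and> eps n \<le> 1"
    and ultra: "is_ultrafilter w"
  shows "algebraically_closed (H eps w)
       \<and> metrized_field (H eps w) (Hnorm eps w)
       \<and> spherically_complete (H eps w) (Hnorm eps w)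
       \<and> Hnorm eps w ` carrier (H eps w) = {0..}
       \<and> (\<forall>e. (eps \<longlongrightarrow> e) w \<and> 0 < e \<longrightarrow>
            (\<exists>\<phi>. \<phi> \<in> ring_iso (H eps w) C_ring \<and>
                 (\<forall>U\<in>carrier (H eps w). Hnorm eps w U = cmod (\<phi> U) powr e))
            \<and> \<not> non_archimedean (H eps w) (Hnorm eps w))
       \<and> ((eps \<longlongrightarrow> 0) w \<longrightarrow> non_archimedean (H eps w) (Hnorm eps w))"
proof -
  interpret S6 eps w
    by unfold_locales (use eps_range ultra in auto)
  have arch: "\<forall>e. (eps \<longlongrightarrow> e) w \<and> 0 < e \<longrightarrow>
            (\<exists>\<phi>. \<phi> \<in> ring_iso (H eps w) C_ring \<and>
                 (\<forall>U\<in>carrier (H eps w). Hnorm eps w U = cmod (\<phi> U) powr e))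
            \<and> \<not> non_archimedean (H eps w) (Hnorm eps w)"
  proof (intro allI impI conjI)
    fix e assume h: "(eps \<longlongrightarrow> e) w \<and> 0 < e"
    show "\<exists>\<phi>. \<phi> \<in> ring_iso (H eps w) C_ring \<and>
                 (\<forall>U\<in>carrier (H eps w). Hnorm eps w U = cmod (\<phi> U) powr e)"
      using phi_iso[of e] Hnorm_phi[of e] h by blast
    show "\<not> non_archimedean (H eps w) (Hnorm eps w)"
      using H_not_nonarch[of e] h by blast
  qed
  show ?thesis
    using H_alg_closed H_metrized H_sph H_image arch H_nonarch by blast
qed

end
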